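(* Let $c\ge0$ be a budget. Let $w^*$ (together with $\lambda_2^*,\mu^*$) be an optimal solution of $$\max_{w,\lambda_2,\mu}\ \lambda_2\quad\text{s.t.}\quad \sum_{\{i,j\}\in E_3}w_{ij}L_{ij}+L_0+\mu\boldsymbol e\boldsymbol e^T-\lambda_2 I\succeq 0,\ \ \sum_{\{i,j\}\in E_3}w_{ij}=c,\ \ w_{ij}\ge 0,$$ and let $(\xi,u_1,\dots,u_n)$ be an optimal solution of the embedding problem $$\max_{\xi\in\mathbb{R},\,u_i\in\mathbb{R}^n}\ c\xi-\sum_{\{i,j\}\in E_1\cup E_2}\|u_i-u_j\|^2\quad\text{s.t.}\quad \sum_{i\in V}\|u_i\|^2=1,\ \ \sum_{i\in V}u_i=0,\ \ \|u_i-u_j\|^2\le-\xi\ \ \forall\{i,j\}\in E_3.$$ Then for every $p\in\mathbb{R}^n$, the vector $y=(p^Tu_1,\dots,p^Tu_n)^T$ (the projection of the embedding onto the direction $p$) lies in the eigenspace of $L(w^* )=\sum_{\{i,j\}\in E_3}w^*_{ij}L_{ij}+L_0$ for the eigenvalue $\lambda_2^*$ (its algebraic connectivity), i.e. $L(w^* )y=\lambda_2^*y$.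
   Context: A multiplex network consists of two layers $G_1=(V_1,E_1)$ and $G_2=(V_2,E_2)$, simple undirected graphs with $|V_1|=|V_2|=N$; the vertices of $G_1$ are numbered $1,\dots,N$ and those of $G_2$ are numbered $N+1,\dots,2N$, $n=2N$, $V=V_1\cup V_2$. The interlayer edges form the perfect matching $E_3=\{\{i,N+i\}:i=1,\dots,N\}$ with nonnegative weights $w_{ij}$. $L_{ij}=(\delta_i-\delta_j)(\delta_i-\delta_j)^T$, $\delta_i$ the $i$-th standard basis vector of $\mathbb{R}^n$; $L_0=\sum_{\{i,j\}\in E_1\cup E_2}L_{ij}$; $\boldsymbol e$ is the all-ones vector. The multiplex network is assumed connected; the algebraic connectivity is the second smallest eigenvalue of the Laplacian. *)

theory Defs
  imports Complex_Main
begin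

text \<open>Vertices are the natural numbers 1..n with n = 2N.  Vectors in R^n are functions
  nat => real (only components 1..n matter); n x n matrices are functions nat => nat => real.
  An undirected edge {i,j} is stored as the pair (i,j) with i < j.\<close>

definition delta :: "nat \<Rightarrow> nat \<Rightarrow> real" where
  "delta i a = (if a = i then 1 else 0)"

definition Lij :: "nat \<Rightarrow> nat \<Rightarrow> nat \<Rightarrow> nat \<Rightarrow> real" where
  "Lij i j a b = (delta i a - delta j a) * (delta i b - delta j b)"

definition L0 :: "(nat \<times> nat) set \<Rightarrow> (nat \<times> nat) set \<Rightarrow> nat \<Rightarrow> nat \<Rightarrow> real" where
  "L0 E1 E2 a b = (\<Sum>(i,j)\<in>E1 \<union> E2. Lij i j a b)"

definition Lw :: "nat \<Rightarrow> (nat \<times> nat) set \<Rightarrow> (nat \<times> nat) set \<Rightarrow> (nat \<Rightarrow> real)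
                   \<Rightarrow> nat \<Rightarrow> nat \<Rightarrow> real" where
  "Lw N E1 E2 w a b = (\<Sum>i=1..N. w i * Lij i (N+i) a b) + L0 E1 E2 a b"

definition mat_vec :: "nat \<Rightarrow> (nat \<Rightarrow> nat \<Rightarrow> real) \<Rightarrow> (nat \<Rightarrow> real) \<Rightarrow> nat \<Rightarrow> real" where
  "mat_vec n M x a = (\<Sum>b=1..n. M a b * x b)"

text \<open>Positive semidefinite n x n matrix (symmetric in our uses).\<close>
definition psd :: "nat \<Rightarrow> (nat \<Rightarrow> nat \<Rightarrow> real) \<Rightarrow> bool" where
  "psd n M \<longleftrightarrow> (\<forall>x::nat \<Rightarrow> real. (\<Sum>a=1..n. \<Sum>b=1..n. x a * M a b * x b) \<ge> 0)"

definition simple_graph_on :: "nat set \<Rightarrow> (nat \<times> nat) set \<Rightarrow> bool" where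
  "simple_graph_on V E \<longleftrightarrow> finite E \<and> (\<forall>(i,j)\<in>E. i < j \<and> i \<in> V \<and> j \<in> V)"

text \<open>Adjacency in the multiplex network (E1, E2 and the interlayer matching E3).\<close>
definition multiplex_adj :: "nat \<Rightarrow> (nat \<times> nat) set \<Rightarrow> (nat \<times> nat) set \<Rightarrow> nat \<Rightarrow> nat \<Rightarrow> bool" where
  "multiplex_adj N E1 E2 a b \<longleftrightarrow>
     (a,b) \<in> E1 \<union> E2 \<or> (b,a) \<in> E1 \<union> E2 \<or>
     (a \<in> {1..N} \<and> b = N + a) \<or> (b \<in> {1..N} \<and> a = N + b)"

definition multiplex_connected :: "nat \<Rightarrow> (nat \<times> nat) set \<Rightarrow> (nat \<times> nat) set \<Rightarrow> bool" where
  "multiplex_connected N E1 E2 \<longleftrightarrow>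
     (\<forall>a\<in>{1..2*N}. \<forall>b\<in>{1..2*N}. (multiplex_adj N E1 E2)\<^sup>*\<^sup>* a b)"

definition sdp_feasible :: "nat \<Rightarrow> (nat \<times> nat) set \<Rightarrow> (nat \<times> nat) set \<Rightarrow> real
                            \<Rightarrow> (nat \<Rightarrow> real) \<Rightarrow> real \<Rightarrow> real \<Rightarrow> bool" where
  "sdp_feasible N E1 E2 c w lam mu \<longleftrightarrow>
     psd (2*N) (\<lambda>a b. Lw N E1 E2 w a b + mu - lam * (if a = b then 1 else 0)) \<and>
     (\<Sum>i=1..N. w i) = c \<and> (\<forall>i\<in>{1..N}. w i \<ge> 0)"

definition sdp_optimal :: "nat \<Rightarrow> (nat \<times> nat) set \<Rightarrow> (nat \<times> nat) set \<Rightarrow> real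
                            \<Rightarrow> (nat \<Rightarrow> real) \<Rightarrow> real \<Rightarrow> real \<Rightarrow> bool" where
  "sdp_optimal N E1 E2 c w lam mu \<longleftrightarrow>
     sdp_feasible N E1 E2 c w lam mu \<and>
     (\<forall>w' lam' mu'. sdp_feasible N E1 E2 c w' lam' mu' \<longrightarrow> lam' \<le> lam)"

text \<open>Squared Euclidean distance of u_i, u_j in R^n (u i k = k-th component of u_i).\<close>
definition sqdist :: "nat \<Rightarrow> (nat \<Rightarrow> nat \<Rightarrow> real) \<Rightarrow> nat \<Rightarrow> nat \<Rightarrow> real" where
  "sqdist n u i j = (\<Sum>k=1..n. (u i k - u j k)\<^sup>2)"

definition emb_feasible :: "nat \<Rightarrow> real \<Rightarrow> (nat \<Rightarrow> nat \<Rightarrow> real) \<Rightarrow> bool" where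
  "emb_feasible N xi u \<longleftrightarrow>
     (\<Sum>i=1..2*N. \<Sum>k=1..2*N. (u i k)\<^sup>2) = 1 \<and>
     (\<forall>k\<in>{1..2*N}. (\<Sum>i=1..2*N. u i k) = 0) \<and>
     (\<forall>i\<in>{1..N}. sqdist (2*N) u i (N+i) \<le> - xi)"

definition emb_objective :: "nat \<Rightarrow> (nat \<times> nat) set \<Rightarrow> (nat \<times> nat) set \<Rightarrow> real
                              \<Rightarrow> real \<Rightarrow> (nat \<Rightarrow> nat \<Rightarrow> real) \<Rightarrow> real" where
  "emb_objective N E1 E2 c xi u = c * xi - (\<Sum>(i,j)\<in>E1 \<union> E2. sqdist (2*N) u i j)"

definition emb_optimal :: "nat \<Rightarrow> (nat \<times> nat) set \<Rightarrow> (nat \<times> nat) set \<Rightarrow> real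
                            \<Rightarrow> real \<Rightarrow> (nat \<Rightarrow> nat \<Rightarrow> real) \<Rightarrow> bool" where
  "emb_optimal N E1 E2 c xi u \<longleftrightarrow>
     emb_feasible N xi u \<and>
     (\<forall>xi' u'. emb_feasible N xi' u' \<longrightarrow>
        emb_objective N E1 E2 c xi' u' \<le> emb_objective N E1 E2 c xi u)"

end

theory Submission
  imports Defs
begin


lemma two_fn:
  fixes S :: "'x set" and cmb :: "real \<Rightarrow> 'x \<Rightarrow> 'x \<Rightarrow> 'x" and f g :: "'x \<Rightarrow> real"
  assumes cl: "\<And>s x y. x\<in>S \<Longrightarrow> y\<in>S \<Longrightarrow> 0\<le>s \<Longrightarrow> s\<le>1 \<Longrightarrow> cmb s x y \<in> S"
    and af: "\<And>s x y. x\<in>S \<Longrightarrow> y\<in>S \<Longrightarrow> 0\<le>s \<Longrightarrow> s\<le>1 \<Longrightarrow> f (cmb s x y) = (1-s) * f x + s * f y"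
    and ag: "\<And>s x y. x\<in>S \<Longrightarrow> y\<in>S \<Longrightarrow> 0\<le>s \<Longrightarrow> s\<le>1 \<Longrightarrow> g (cmb s x y) = (1-s) * g x + s * g y"
    and h: "\<And>x. x\<in>S \<Longrightarrow> f x \<ge> 0 \<or> g x \<ge> 0"
  shows "\<exists>t. 0 \<le> t \<and> t \<le> 1 \<and> (\<forall>x\<in>S. t * f x + (1-t) * g x \<ge> 0)"
proof -
  define r where "r x = g x / (g x - f x)" for x
  have key: "r y \<le> r x" if xS: "x\<in>S" and fx: "f x < 0" and yS: "y\<in>S" and gy: "g y < 0" for x y
  proof (rule ccontr)
    assume "\<not> r y \<le> r x"
    hence rl: "r x < r y" by simp
    have gx: "g x \<ge> 0" using h[OF xS] fx by auto
    have fy: "f y \<ge> 0" using h[OF yS] gy by auto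
    define t where "t = (r x + r y)/2"
    have A: "g x - f x > 0" using gx fx by simp
    have B: "f y - g y > 0" using fy gy by simp
    have rx: "r x * (f x - g x) = - g x" unfolding r_def using A by (simp add: field_simps)
    have ry: "r y * (f y - g y) = - g y" unfolding r_def using B by (simp add: field_simps)
    have "t * (f x - g x) < r x * (f x - g x)"
      using A rl unfolding t_def by (intro mult_strict_right_mono_neg) auto
    hence hx: "t * f x + (1-t) * g x < 0" using rx by (simp add: algebra_simps)
    have "t * (f y - g y) < r y * (f y - g y)"
      using B rl unfolding t_def by (intro mult_strict_right_mono) auto
    hence hy: "t * f y + (1-t) * g y < 0" using ry by (simp add: algebra_simps)
    define s where "s = (g x - f x) / ((g x - f x) + (f y - g y))"
    have s0: "0 \<le> s" "s \<le> 1" unfolding s_def using A B by (auto simp: field_simps)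
    define z where "z = cmb s x y"
    have zS: "z \<in> S" unfolding z_def using cl xS yS s0 by auto
    have fz: "f z = (1-s) * f x + s * f y" unfolding z_def using af xS yS s0 by auto
    have gz: "g z = (1-s) * g x + s * g y" unfolding z_def using ag xS yS s0 by auto
    have "(1-s) * (f x - g x) + s * (f y - g y) = 0"
      unfolding s_def using A B by (simp add: field_simps)
    hence fgz: "f z = g z" using fz gz by (simp add: algebra_simps)
    have "t * f z + (1-t) * g z = (1-s) * (t * f x + (1-t) * g x) + s * (t * f y + (1-t) * g y)"
      unfolding fz gz by (simp add: algebra_simps)
    also have "\<dots> < 0"
    proof (cases "s = 0")
      case True then show ?thesis using hx by simp
    next
      case False
      then have "s > 0" using s0 by simp
      have "(1-s) * (t * f x + (1-t) * g x) \<le> 0" using s0 hx by (simp add: mult_nonneg_nonpos)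
      moreover have "s * (t * f y + (1-t) * g y) < 0" using \<open>s>0\<close> hy by (simp add: mult_pos_neg)
      ultimately show ?thesis by linarith
    qed
    finally have "f z < 0" using fgz by (simp add: algebra_simps)
    with fgz h[OF zS] show False by auto
  qed
  show ?thesis
  proof (cases "\<forall>y\<in>S. g y \<ge> 0")
    case True
    then show ?thesis by (intro exI[of _ 0]) auto
  next
    case False
    then obtain y0 where y0: "y0 \<in> S" "g y0 < 0" by (auto simp: not_le)
    define B where "B = {y\<in>S. g y < 0}"
    define t where "t = Sup (r ` B)"
    have rB: "0 < r y \<and> r y \<le> 1" if "y \<in> B" for y
    proof -
      have yS: "y\<in>S" and gy: "g y < 0" using that B_def by auto
      have fy: "f y \<ge> 0" using h[OF yS] gy by auto
      show ?thesis unfolding r_def using gy fy by (auto simp: field_simps)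
    qed
    have bdd: "bdd_above (r ` B)" using rB by (auto intro!: bdd_aboveI[of _ 1])
    have y0B: "y0 \<in> B" using y0 B_def by auto
    have tge: "r y \<le> t" if "y \<in> B" for y unfolding t_def using bdd that by (auto intro: cSup_upper)
    have t1: "t \<le> 1" unfolding t_def using y0B rB by (auto intro!: cSup_least)
    have t0: "0 \<le> t" using tge[OF y0B] rB[OF y0B] by simp
    have tle: "t \<le> r x" if "x \<in> S" "f x < 0" for x
      unfolding t_def using y0B key that B_def by (auto intro!: cSup_least)
    show ?thesis
    proof (intro exI[of _ t] conjI t0 t1 ballI)
      fix x assume xS: "x \<in> S"
      consider "g x < 0" | "f x < 0" | "f x \<ge> 0 \<and> g x \<ge> 0" by linarith
      then show "t * f x + (1-t) * g x \<ge> 0"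
      proof cases
        case 1
        have fx: "f x \<ge> 0" using h[OF xS] 1 by auto
        have B': "f x - g x > 0" using 1 fx by simp
        have rx: "r x * (f x - g x) = - g x" unfolding r_def using B' by (simp add: field_simps)
        have "r x * (f x - g x) \<le> t * (f x - g x)"
          using tge[of x] xS 1 B_def B' by (intro mult_right_mono) auto
        then show ?thesis using rx by (simp add: algebra_simps)
      next
        case 2
        have gx: "g x \<ge> 0" using h[OF xS] 2 by auto
        have A': "f x - g x < 0" using 2 gx by simp
        have rx: "r x * (f x - g x) = - g x" unfolding r_def using A' by (simp add: field_simps)
        have "r x * (f x - g x) \<le> t * (f x - g x)"
          using tle[OF xS 2] A' by (intro mult_right_mono_neg) auto
        then show ?thesis using rx by (simp add: algebra_simps)
      next
        case 3 then show ?thesis using t0 t1 by simp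
      qed
    qed
  qed
qed

lemma fan:
  fixes I :: "'i set" and g :: "'i \<Rightarrow> 'x \<Rightarrow> real" and cmb :: "real \<Rightarrow> 'x \<Rightarrow> 'x \<Rightarrow> 'x"
  assumes "finite I" "I \<noteq> {}"
  shows "(\<And>s x y. x\<in>S \<Longrightarrow> y\<in>S \<Longrightarrow> 0\<le>s \<Longrightarrow> s\<le>1 \<Longrightarrow> cmb s x y \<in> S) \<Longrightarrow>
    (\<And>i s x y. i\<in>I \<Longrightarrow> x\<in>S \<Longrightarrow> y\<in>S \<Longrightarrow> 0\<le>s \<Longrightarrow> s\<le>1 \<Longrightarrow> g i (cmb s x y) = (1-s) * g i x + s * g i y) \<Longrightarrow>
    (\<And>x. x\<in>S \<Longrightarrow> \<exists>i\<in>I. g i x \<ge> 0) \<Longrightarrow>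
    \<exists>l. (\<forall>i\<in>I. l i \<ge> 0) \<and> sum l I = 1 \<and> (\<forall>x\<in>S. (\<Sum>i\<in>I. l i * g i x) \<ge> 0)"
  using assms
proof (induction I arbitrary: S rule: finite_ne_induct)
  case (singleton i)
  then show ?case by (intro exI[of _ "\<lambda>_. 1"]) auto
next
  case (insert j I)
  define S' where "S' = {x\<in>S. g j x < 0}"
  have cl': "cmb s x y \<in> S'" if "x\<in>S'" "y\<in>S'" "0\<le>s" "s\<le>1" for s x y
  proof -
    have gx: "g j x < 0" and gy: "g j y < 0" using that S'_def by auto
    have "g j (cmb s x y) = (1-s) * g j x + s * g j y" using insert.prems(2)[of j x y s] that S'_def by auto
    also have "\<dots> < 0"
    proof (cases "s = 0")
      case True then show ?thesis using gx by simp
    next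
      case False
      then have "s > 0" using that by simp
      have "(1-s) * g j x \<le> 0" using that gx by (simp add: mult_nonneg_nonpos)
      moreover have "s * g j y < 0" using \<open>s>0\<close> gy by (simp add: mult_pos_neg)
      ultimately show ?thesis by linarith
    qed
    finally show ?thesis using insert.prems(1)[of x y s] that S'_def by auto
  qed
  have "\<exists>l. (\<forall>i\<in>I. l i \<ge> 0) \<and> sum l I = 1 \<and> (\<forall>x\<in>S'. (\<Sum>i\<in>I. l i * g i x) \<ge> 0)"
  proof (rule insert.IH)
    show "cmb s x y \<in> S'" if "x\<in>S'" "y\<in>S'" "0\<le>s" "s\<le>1" for s x y using cl' that by blast
    show "g i (cmb s x y) = (1-s) * g i x + s * g i y" if "i\<in>I" "x\<in>S'" "y\<in>S'" "0\<le>s" "s\<le>1" for i s x y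
      using insert.prems(2) that S'_def by auto
    show "\<exists>i\<in>I. g i x \<ge> 0" if "x\<in>S'" for x
      using insert.prems(3)[of x] that S'_def by auto
  qed
  then obtain m where m: "\<forall>i\<in>I. m i \<ge> 0" "sum m I = 1" "\<forall>x\<in>S'. (\<Sum>i\<in>I. m i * g i x) \<ge> 0" by blast
  define h where "h x = (\<Sum>i\<in>I. m i * g i x)" for x
  have "\<exists>t. 0 \<le> t \<and> t \<le> 1 \<and> (\<forall>x\<in>S. t * h x + (1-t) * g j x \<ge> 0)"
  proof (rule two_fn[where cmb=cmb])
    show "cmb s x y \<in> S" if "x\<in>S" "y\<in>S" "0\<le>s" "s\<le>1" for s x y using insert.prems(1) that by blast
    show "h (cmb s x y) = (1-s) * h x + s * h y" if "x\<in>S" "y\<in>S" "0\<le>s" "s\<le>1" for s x y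
    proof -
      have "h (cmb s x y) = (\<Sum>i\<in>I. m i * ((1-s) * g i x + s * g i y))"
        unfolding h_def using insert.prems(2) that by (intro sum.cong) auto
      also have "\<dots> = (1-s) * h x + s * h y"
        unfolding h_def by (simp add: distrib_left sum.distrib sum_distrib_left mult.left_commute)
      finally show ?thesis .
    qed
    show "g j (cmb s x y) = (1-s) * g j x + s * g j y" if "x\<in>S" "y\<in>S" "0\<le>s" "s\<le>1" for s x y
      using insert.prems(2) that by auto
    show "h x \<ge> 0 \<or> g j x \<ge> 0" if "x\<in>S" for x
      using m(3) that S'_def h_def by force
  qed
  then obtain t where t: "0 \<le> t" "t \<le> 1" "\<forall>x\<in>S. t * h x + (1-t) * g j x \<ge> 0" by blast
  define l where "l i = (if i = j then 1 - t else t * m i)" for i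
  have sI: "(\<Sum>i\<in>I. l i * f i) = t * (\<Sum>i\<in>I. m i * f i)" for f :: "'i \<Rightarrow> real"
  proof -
    have "(\<Sum>i\<in>I. l i * f i) = (\<Sum>i\<in>I. t * (m i * f i))"
      using insert.hyps unfolding l_def by (intro sum.cong) auto
    then show ?thesis by (simp add: sum_distrib_left)
  qed
  show ?case
  proof (intro exI[of _ l] conjI ballI)
    show "l i \<ge> 0" if "i \<in> insert j I" for i using that t m(1) unfolding l_def by auto
    have "sum l (insert j I) = l j + (\<Sum>i\<in>I. l i * 1)" using insert.hyps by simp
    also have "\<dots> = 1" using sI[of "\<lambda>_. 1"] m(2) unfolding l_def by simp
    finally show "sum l (insert j I) = 1" .
    fix x assume "x \<in> S"
    have "(\<Sum>i\<in>insert j I. l i * g i x) = l j * g j x + (\<Sum>i\<in>I. l i * g i x)" using insert.hyps by simp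
    also have "\<dots> = t * h x + (1-t) * g j x" using sI[of "\<lambda>i. g i x"] unfolding l_def h_def by simp
    finally show "(\<Sum>i\<in>insert j I. l i * g i x) \<ge> 0" using t(3) \<open>x\<in>S\<close> by simp
  qed
qed


lemma sum_single:
  assumes "finite I" "a \<in> I" "\<And>b. b\<in>I \<Longrightarrow> b \<noteq> a \<Longrightarrow> f b = 0"
  shows "sum f I = f a"
proof -
  have "sum f I = f a + sum f (I - {a})" using assms by (simp add: sum.remove)
  also have "sum f (I - {a}) = 0" using assms by (intro sum.neutral) auto
  finally show ?thesis by simp
qed

lemma quad_insert:
  fixes X :: "nat \<Rightarrow> nat \<Rightarrow> real"
  assumes fin: "finite I" and j: "j \<notin> I" and sym: "\<forall>a\<in>insert j I. \<forall>b\<in>insert j I. X a b = X b a"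
  shows "(\<Sum>a\<in>insert j I. \<Sum>b\<in>insert j I. x a * X a b * x b) =
     (\<Sum>a\<in>I. \<Sum>b\<in>I. x a * X a b * x b) + 2 * x j * (\<Sum>a\<in>I. x a * X a j) + x j * X j j * x j"
proof -
  have e1: "(\<Sum>b\<in>I. x j * X j b * x b) = x j * (\<Sum>a\<in>I. x a * X a j)"
    unfolding sum_distrib_left
  proof (intro sum.cong refl)
    fix b assume "b \<in> I"
    then have "X j b = X b j" using sym by blast
    then show "x j * X j b * x b = x j * (x b * X b j)" by simp
  qed
  have e2: "(\<Sum>a\<in>I. x a * X a j * x j) = x j * (\<Sum>a\<in>I. x a * X a j)"
    unfolding sum_distrib_left by (intro sum.cong) auto
  have "(\<Sum>a\<in>insert j I. \<Sum>b\<in>insert j I. x a * X a b * x b) =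
     (x j * X j j * x j + (\<Sum>b\<in>I. x j * X j b * x b)) + (\<Sum>a\<in>I. x a * X a j * x j + (\<Sum>b\<in>I. x a * X a b * x b))"
    using fin j by simp
  also have "\<dots> = (\<Sum>a\<in>I. \<Sum>b\<in>I. x a * X a b * x b) + 2 * x j * (\<Sum>a\<in>I. x a * X a j) + x j * X j j * x j"
    unfolding sum.distrib e1 e2 by simp
  finally show ?thesis .
qed


lemma chol:
  fixes X :: "nat \<Rightarrow> nat \<Rightarrow> real"
  assumes "finite I"
  shows "(\<forall>a\<in>I. \<forall>b\<in>I. X a b = X b a) \<Longrightarrow> (\<forall>x. (\<Sum>a\<in>I. \<Sum>b\<in>I. x a * X a b * x b) \<ge> 0) \<Longrightarrow>
     \<exists>U. \<forall>a\<in>I. \<forall>b\<in>I. X a b = (\<Sum>k\<in>I. U a k * U b k)"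
  using assms
proof (induction I arbitrary: X rule: finite_induct)
  case empty
  then show ?case by simp
next
  case (insert j I)
  note sym = insert.prems(1) and psd = insert.prems(2)
  have Q: "(\<Sum>a\<in>insert j I. \<Sum>b\<in>insert j I. x a * X a b * x b) =
     (\<Sum>a\<in>I. \<Sum>b\<in>I. x a * X a b * x b) + 2 * x j * (\<Sum>a\<in>I. x a * X a j) + x j * X j j * x j" for x
    using quad_insert[OF insert.hyps(1,2) sym] .
  have onI: "(\<Sum>a\<in>I. \<Sum>b\<in>I. x a * Y a b * x b) = (\<Sum>a\<in>I. \<Sum>b\<in>I. x' a * Y a b * x' b)"
    if "\<forall>a\<in>I. x a = x' a" for x x' and Y :: "nat \<Rightarrow> nat \<Rightarrow> real"
    using that by (intro sum.cong) auto
  have Xjj: "X j j \<ge> 0"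
  proof -
    define x where "x = (\<lambda>a::nat. if a = j then (1::real) else 0)"
    have x0: "\<forall>a\<in>I. x a = 0" using insert.hyps unfolding x_def by auto
    have xj: "x j = 1" unfolding x_def by simp
    have h1: "(\<Sum>a\<in>I. \<Sum>b\<in>I. x a * X a b * x b) = 0" using x0 by simp
    have h2: "(\<Sum>a\<in>I. x a * X a j) = 0" using x0 by simp
    have "0 \<le> (\<Sum>a\<in>insert j I. \<Sum>b\<in>insert j I. x a * X a b * x b)" using psd by blast
    also have "\<dots> = X j j" unfolding Q h1 h2 xj by simp
    finally show ?thesis .
  qed
  show ?case
  proof (cases "X j j = 0")
    case True
    have Xaj: "X a j = 0" if aI: "a \<in> I" for a
    proof (rule ccontr)
      assume ne: "X a j \<noteq> 0"
      define t where "t = - (X a a + 1) / (2 * X a j)"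
      define x where "x = (\<lambda>b::nat. if b = j then t else if b = a then 1 else 0)"
      have xa: "\<forall>b\<in>I. x b = (if b = a then 1 else 0)" using insert.hyps unfolding x_def by auto
      have s1: "(\<Sum>a'\<in>I. \<Sum>b\<in>I. x a' * X a' b * x b) = X a a"
      proof -
        have "(\<Sum>a'\<in>I. \<Sum>b\<in>I. x a' * X a' b * x b) = (\<Sum>b\<in>I. x a * X a b * x b)"
          using insert.hyps aI xa by (intro sum_single) auto
        also have "\<dots> = x a * X a a * x a"
          using insert.hyps aI xa by (intro sum_single) auto
        finally show ?thesis using xa aI by simp
      qed
      have s2: "(\<Sum>a'\<in>I. x a' * X a' j) = X a j"
      proof -
        have "(\<Sum>a'\<in>I. x a' * X a' j) = x a * X a j"
          using insert.hyps aI xa by (intro sum_single) auto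
        then show ?thesis using xa aI by simp
      qed
      have xj: "x j = t" unfolding x_def by simp
      have "0 \<le> (\<Sum>a\<in>insert j I. \<Sum>b\<in>insert j I. x a * X a b * x b)" using psd by blast
      also have "\<dots> = X a a + 2 * t * X a j" unfolding Q s1 s2 xj True by simp
      finally have "0 \<le> X a a + 2 * t * X a j" .
      also have "\<dots> = -1" unfolding t_def using ne by (simp add: field_simps)
      finally show False by simp
    qed
    have psdI: "\<forall>x. (\<Sum>a\<in>I. \<Sum>b\<in>I. x a * X a b * x b) \<ge> 0"
    proof
      fix x :: "nat \<Rightarrow> real"
      define x' where "x' = x(j := 0)"
      have "(\<Sum>a\<in>I. \<Sum>b\<in>I. x a * X a b * x b) = (\<Sum>a\<in>I. \<Sum>b\<in>I. x' a * X a b * x' b)"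
        using insert.hyps unfolding x'_def by (intro onI) auto
      also have "\<dots> = (\<Sum>a\<in>insert j I. \<Sum>b\<in>insert j I. x' a * X a b * x' b)"
        using Q[of x'] unfolding x'_def by simp
      also have "\<dots> \<ge> 0" using psd by blast
      finally show "(\<Sum>a\<in>I. \<Sum>b\<in>I. x a * X a b * x b) \<ge> 0" .
    qed
    have symI: "\<forall>a\<in>I. \<forall>b\<in>I. X a b = X b a" using sym by blast
    obtain U' where U': "\<forall>a\<in>I. \<forall>b\<in>I. X a b = (\<Sum>k\<in>I. U' a k * U' b k)"
      using insert.IH[of X] symI psdI insert.hyps(1) by blast
    define U where "U a k = (if k = j \<or> a = j then 0 else U' a k)" for a k
    show ?thesis
    proof (intro exI[of _ U] ballI)
      fix a b assume a: "a \<in> insert j I" and b: "b \<in> insert j I"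
      have "(\<Sum>k\<in>insert j I. U a k * U b k) = (\<Sum>k\<in>I. U a k * U b k)"
        using insert.hyps unfolding U_def by simp
      show "X a b = (\<Sum>k\<in>insert j I. U a k * U b k)"
      proof (cases "a = j \<or> b = j")
        case True
        have symab: "X a b = X b a" using sym a b by blast
        have "X a b = 0"
        proof (cases "a = j")
          case aj: True
          show ?thesis
          proof (cases "b = j")
            case True then show ?thesis using aj \<open>X j j = 0\<close> by simp
          next
            case False then have "b \<in> I" using b by simp
            then show ?thesis using Xaj[of b] aj symab by simp
          qed
        next
          case False then have "a \<in> I" "b = j" using a True by auto
          then show ?thesis using Xaj[of a] by simp
        qed
        moreover have "(\<Sum>k\<in>insert j I. U a k * U b k) = 0" using True unfolding U_def by auto
        ultimately show ?thesis by simp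
      next
        case False
        then have "(\<Sum>k\<in>insert j I. U a k * U b k) = (\<Sum>k\<in>I. U' a k * U' b k)"
          using insert.hyps unfolding U_def by (simp; intro sum.cong; auto)
        then show ?thesis using U' a b False by auto
      qed
    qed
  next
    case False
    hence d: "X j j > 0" using Xjj by simp
    define v where "v a = X a j / sqrt (X j j)" for a
    define Y where "Y a b = X a b - v a * v b" for a b
    have vv: "v a * v b = X a b" if "a = j \<or> b = j" "a \<in> insert j I" "b \<in> insert j I" for a b
    proof -
      have "v a * v b = X a j * X b j / X j j" unfolding v_def using d
        by (simp add: field_simps)
      have s1: "X j b = X b j" if "b \<in> insert j I" for b using sym that by blast
      show ?thesis
      proof (cases "a = j")
        case True
        then show ?thesis using \<open>v a * v b = _\<close> d s1[of b] that by simp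
      next
        case False
        then have "b = j" using that by simp
        then show ?thesis using \<open>v a * v b = _\<close> d by simp
      qed
    qed
    have symY: "\<forall>a\<in>I. \<forall>b\<in>I. Y a b = Y b a"
    proof (intro ballI)
      fix a b assume "a \<in> I" "b \<in> I"
      then have "X a b = X b a" using sym by blast
      then show "Y a b = Y b a" unfolding Y_def by simp
    qed
    have psdY: "\<forall>x. (\<Sum>a\<in>I. \<Sum>b\<in>I. x a * Y a b * x b) \<ge> 0"
    proof
      fix x :: "nat \<Rightarrow> real"
      define s where "s = (\<Sum>a\<in>I. x a * X a j)"
      define x' where "x' = x(j := - s / X j j)"
      have sv: "(\<Sum>a\<in>I. x a * v a) = s / sqrt (X j j)"
        unfolding s_def v_def sum_divide_distrib by simp
      have "(\<Sum>a\<in>I. \<Sum>b\<in>I. x a * Y a b * x b) = (\<Sum>a\<in>I. \<Sum>b\<in>I. x a * X a b * x b) - (\<Sum>a\<in>I. \<Sum>b\<in>I. (x a * v a) * (x b * v b))"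
        unfolding Y_def sum_subtractf[symmetric] by (intro sum.cong) (auto simp: algebra_simps)
      also have "(\<Sum>a\<in>I. \<Sum>b\<in>I. (x a * v a) * (x b * v b)) = (\<Sum>a\<in>I. x a * v a) * (\<Sum>b\<in>I. x b * v b)"
        by (simp add: sum_product)
      also have "\<dots> = s^2 / X j j" unfolding sv using d by (simp add: power2_eq_square field_simps)
      finally have e: "(\<Sum>a\<in>I. \<Sum>b\<in>I. x a * Y a b * x b) = (\<Sum>a\<in>I. \<Sum>b\<in>I. x a * X a b * x b) - s^2 / X j j" .
      have "(\<Sum>a\<in>I. \<Sum>b\<in>I. x a * X a b * x b) = (\<Sum>a\<in>I. \<Sum>b\<in>I. x' a * X a b * x' b)"
        using insert.hyps unfolding x'_def by (intro onI) auto
      moreover have "(\<Sum>a\<in>I. x' a * X a j) = s"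
        unfolding s_def x'_def using insert.hyps by (intro sum.cong) auto
      moreover have "x' j = - s / X j j" unfolding x'_def by simp
      ultimately have "(\<Sum>a\<in>insert j I. \<Sum>b\<in>insert j I. x' a * X a b * x' b) = (\<Sum>a\<in>I. \<Sum>b\<in>I. x a * X a b * x b) - s^2 / X j j"
        using Q[of x'] d by (simp add: field_simps power2_eq_square)
      then show "(\<Sum>a\<in>I. \<Sum>b\<in>I. x a * Y a b * x b) \<ge> 0" using e psd[rule_format, of x'] by linarith
    qed
    obtain U' where U': "\<forall>a\<in>I. \<forall>b\<in>I. Y a b = (\<Sum>k\<in>I. U' a k * U' b k)"
      using insert.IH[of Y] symY psdY insert.hyps(1) by blast
    define U where "U a k = (if k = j then v a else if a = j then 0 else U' a k)" for a k
    show ?thesis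
    proof (intro exI[of _ U] ballI)
      fix a b assume a: "a \<in> insert j I" and b: "b \<in> insert j I"
      have e: "(\<Sum>k\<in>insert j I. U a k * U b k) = v a * v b + (\<Sum>k\<in>I. U a k * U b k)"
        using insert.hyps unfolding U_def by simp
      show "X a b = (\<Sum>k\<in>insert j I. U a k * U b k)"
      proof (cases "a = j \<or> b = j")
        case True
        moreover have "(\<Sum>k\<in>I. U a k * U b k) = 0" using True insert.hyps unfolding U_def by (intro sum.neutral) auto
        ultimately show ?thesis using e vv a b by simp
      next
        case False
        then have "(\<Sum>k\<in>I. U a k * U b k) = (\<Sum>k\<in>I. U' a k * U' b k)"
          using insert.hyps unfolding U_def by (intro sum.cong) auto
        moreover have "a \<in> I" "b \<in> I" using a b False by auto
        moreover have "X a b - v a * v b = (\<Sum>k\<in>I. U' a k * U' b k)" using U' calculation(2,3) unfolding Y_def by blast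
        ultimately show ?thesis using e by simp
      qed
    qed
  qed
qed



definition quad :: "nat \<Rightarrow> (nat \<Rightarrow> nat \<Rightarrow> real) \<Rightarrow> (nat \<Rightarrow> real) \<Rightarrow> real" where
  "quad n A x = (\<Sum>a=1..n. \<Sum>b=1..n. x a * A a b * x b)"
definition inner2 :: "nat \<Rightarrow> (nat \<Rightarrow> nat \<Rightarrow> real) \<Rightarrow> (nat \<Rightarrow> nat \<Rightarrow> real) \<Rightarrow> real" where
  "inner2 n A X = (\<Sum>a=1..n. \<Sum>b=1..n. A a b * X a b)"
definition gram :: "nat \<Rightarrow> (nat \<Rightarrow> nat \<Rightarrow> real) \<Rightarrow> nat \<Rightarrow> nat \<Rightarrow> real" where
  "gram n u a b = (\<Sum>k=1..n. u a k * u b k)"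

lemma inner2_gram: "inner2 n A (gram n u) = (\<Sum>k=1..n. quad n A (\<lambda>a. u a k))"
proof -
  have "inner2 n A (gram n u) = (\<Sum>a=1..n. \<Sum>b=1..n. \<Sum>k=1..n. u a k * A a b * u b k)"
    unfolding inner2_def gram_def sum_distrib_left by (intro sum.cong refl) (simp add: algebra_simps)
  also have "\<dots> = (\<Sum>a=1..n. \<Sum>k=1..n. \<Sum>b=1..n. u a k * A a b * u b k)"
    by (intro sum.cong refl sum.swap)
  also have "\<dots> = (\<Sum>k=1..n. quad n A (\<lambda>a. u a k))"
    unfolding quad_def by (rule sum.swap)
  finally show ?thesis .
qed

lemma inner2_cong: "(\<And>a b. a\<in>{1..n} \<Longrightarrow> b\<in>{1..n} \<Longrightarrow> X a b = Y a b) \<Longrightarrow> inner2 n A X = inner2 n A Y"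
  unfolding inner2_def by (intro sum.cong refl) auto

lemma quad_inner2: "quad n A x = inner2 n A (\<lambda>a b. x a * x b)"
  unfolding quad_def inner2_def by (intro sum.cong refl) (simp add: algebra_simps)

lemma delta_sum: "(\<Sum>a=1..n. x a * delta i a) = (if i \<in> {1..n} then x i else 0)"
  unfolding delta_def by (simp add: sum.delta' if_distrib cong: if_cong)

lemma quad_Lij: "i \<in> {1..n} \<Longrightarrow> j \<in> {1..n} \<Longrightarrow> quad n (Lij i j) x = (x i - x j)^2"
proof -
  assume ij: "i \<in> {1..n}" "j \<in> {1..n}"
  have "quad n (Lij i j) x = (\<Sum>a=1..n. x a * (delta i a - delta j a)) * (\<Sum>b=1..n. x b * (delta i b - delta j b))"
    unfolding quad_def Lij_def sum_product by (intro sum.cong refl) (simp add: algebra_simps)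
  also have "(\<Sum>a=1..n. x a * (delta i a - delta j a)) = x i - x j"
    unfolding right_diff_distrib sum_subtractf delta_sum using ij by simp
  finally show ?thesis by (simp add: power2_eq_square)
qed

lemma inner2_Lij: "i \<in> {1..n} \<Longrightarrow> j \<in> {1..n} \<Longrightarrow> inner2 n (Lij i j) (gram n u) = sqdist n u i j"
  unfolding inner2_gram sqdist_def by (simp add: quad_Lij)

lemma Lij_row: "i \<in> {1..n} \<Longrightarrow> j \<in> {1..n} \<Longrightarrow> (\<Sum>b=1..n. Lij i j a b) = 0"
proof -
  assume ij: "i \<in> {1..n}" "j \<in> {1..n}"
  have "(\<Sum>b=1..n. Lij i j a b) = (delta i a - delta j a) * (\<Sum>b=1..n. 1 * (delta i b - delta j b))"
    unfolding Lij_def sum_distrib_left by simp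
  also have "(\<Sum>b=1..n. 1 * (delta i b - delta j b)) = 0"
    using ij by (simp only: right_diff_distrib sum_subtractf delta_sum)
  finally show ?thesis by simp
qed

lemma inner2_L0: "inner2 n (L0 E1 E2) X = (\<Sum>(i,j)\<in>E1 \<union> E2. inner2 n (Lij i j) X)"
proof -
  have "inner2 n (L0 E1 E2) X = (\<Sum>a=1..n. \<Sum>b=1..n. \<Sum>p\<in>E1 \<union> E2. Lij (fst p) (snd p) a b * X a b)"
    unfolding inner2_def L0_def sum_distrib_right by (simp add: case_prod_beta)
  also have "\<dots> = (\<Sum>a=1..n. \<Sum>p\<in>E1 \<union> E2. \<Sum>b=1..n. Lij (fst p) (snd p) a b * X a b)"
    by (intro sum.cong refl sum.swap)
  also have "\<dots> = (\<Sum>p\<in>E1 \<union> E2. \<Sum>a=1..n. \<Sum>b=1..n. Lij (fst p) (snd p) a b * X a b)"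
    by (rule sum.swap)
  finally show ?thesis unfolding inner2_def by (simp add: case_prod_beta)
qed

lemma inner2_Lw: "inner2 n (Lw N E1 E2 w) X = (\<Sum>i=1..N. w i * inner2 n (Lij i (N+i)) X) + inner2 n (L0 E1 E2) X"
proof -
  have "inner2 n (Lw N E1 E2 w) X = (\<Sum>a=1..n. \<Sum>b=1..n. \<Sum>i=1..N. w i * (Lij i (N+i) a b * X a b)) + inner2 n (L0 E1 E2) X"
    unfolding inner2_def Lw_def sum_distrib_right sum.distrib distrib_right by (simp add: algebra_simps)
  also have "(\<Sum>a=1..n. \<Sum>b=1..n. \<Sum>i=1..N. w i * (Lij i (N+i) a b * X a b)) = (\<Sum>i=1..N. w i * inner2 n (Lij i (N+i)) X)"
  proof -
    have "(\<Sum>a=1..n. \<Sum>b=1..n. \<Sum>i=1..N. w i * (Lij i (N+i) a b * X a b)) = (\<Sum>a=1..n. \<Sum>i=1..N. \<Sum>b=1..n. w i * (Lij i (N+i) a b * X a b))"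
      by (intro sum.cong refl sum.swap)
    also have "\<dots> = (\<Sum>i=1..N. \<Sum>a=1..n. \<Sum>b=1..n. w i * (Lij i (N+i) a b * X a b))"
      by (rule sum.swap)
    finally show ?thesis unfolding inner2_def sum_distrib_left .
  qed
  finally show ?thesis .
qed

lemma inner2_cmb: "inner2 n A (\<lambda>a b. (1-s) * X a b + s * Y a b) = (1-s) * inner2 n A X + s * inner2 n A Y"
proof -
  have "inner2 n A (\<lambda>a b. (1-s) * X a b + s * Y a b) = (\<Sum>a=1..n. \<Sum>b=1..n. (1-s) * (A a b * X a b) + s * (A a b * Y a b))"
    unfolding inner2_def by (intro sum.cong refl) (simp add: algebra_simps)
  then show ?thesis unfolding inner2_def by (simp only: sum.distrib sum_distrib_left)
qed

lemma quad_cmb: "quad n (\<lambda>a b. (1-s) * X a b + s * Y a b) x = (1-s) * quad n X x + s * quad n Y x"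
proof -
  have "quad n (\<lambda>a b. (1-s) * X a b + s * Y a b) x = (\<Sum>a=1..n. \<Sum>b=1..n. (1-s) * (x a * X a b * x b) + s * (x a * Y a b * x b))"
    unfolding quad_def by (intro sum.cong refl) (simp add: algebra_simps)
  then show ?thesis unfolding quad_def by (simp only: sum.distrib sum_distrib_left)
qed

lemma quad_shift:
  fixes A :: "nat \<Rightarrow> nat \<Rightarrow> real"
  assumes sym: "\<And>a b. A a b = A b a" and row: "\<And>a. a \<in> {1..n} \<Longrightarrow> (\<Sum>b=1..n. A a b) = 0"
  shows "quad n A (\<lambda>a. x a - m) = quad n A x"
proof -
  have r: "(\<Sum>b=1..n. A a b * (x b - m)) = (\<Sum>b=1..n. A a b * x b)" if "a \<in> {1..n}" for a
    using row[OF that] by (simp add: right_diff_distrib sum_subtractf sum_distrib_right[symmetric])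
  have z: "(\<Sum>a=1..n. \<Sum>b=1..n. A a b * x b) = 0"
  proof -
    have "(\<Sum>a=1..n. \<Sum>b=1..n. A a b * x b) = (\<Sum>b=1..n. x b * (\<Sum>a=1..n. A b a))"
      by (subst sum.swap) (simp add: sum_distrib_left sym mult.commute)
    also have "\<dots> = 0" using row by simp
    finally show ?thesis .
  qed
  have "quad n A (\<lambda>a. x a - m) = (\<Sum>a=1..n. (x a - m) * (\<Sum>b=1..n. A a b * (x b - m)))"
    unfolding quad_def sum_distrib_left by (simp add: algebra_simps)
  also have "\<dots> = (\<Sum>a=1..n. (x a - m) * (\<Sum>b=1..n. A a b * x b))"
    using r by (intro sum.cong refl) simp
  also have "\<dots> = (\<Sum>a=1..n. x a * (\<Sum>b=1..n. A a b * x b)) - m * (\<Sum>a=1..n. \<Sum>b=1..n. A a b * x b)"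
    by (simp add: left_diff_distrib sum_subtractf sum_distrib_left)
  also have "\<dots> = quad n A x" unfolding z quad_def sum_distrib_left by (simp add: algebra_simps)
  finally show ?thesis .
qed

lemma delta_sum2: "(\<Sum>b=1..(n::nat). (if a = b then 1 else 0) * f b) = (if a \<in> {1..n} then f a else (0::real))"
proof -
  have "(\<Sum>b=1..n. (if a = b then 1 else 0) * f b) = (\<Sum>b=1..n. if a = b then f a else 0)"
    by (intro sum.cong refl) auto
  also have "\<dots> = (if a \<in> {1..n} then f a else 0)" by (rule sum.delta'[OF finite_atLeastAtMost])
  finally show ?thesis .
qed

lemma quad_shiftI:
  "quad n (\<lambda>a b. A a b + m - l * (if a = b then 1 else 0)) x = quad n A x + m * (\<Sum>a=1..n. x a)^2 - l * (\<Sum>a=1..n. (x a)^2)"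
proof -
  have "quad n (\<lambda>a b. A a b + m - l * (if a = b then 1 else 0)) x =
     quad n A x + m * (\<Sum>a=1..n. \<Sum>b=1..n. x a * x b) - l * (\<Sum>a=1..n. \<Sum>b=1..n. x a * (if a = b then 1 else 0) * x b)"
    unfolding quad_def by (simp add: algebra_simps sum.distrib sum_subtractf sum_distrib_left)
  also have "(\<Sum>a=1..n. \<Sum>b=1..n. x a * x b) = (\<Sum>a=1..n. x a)^2"
    by (simp add: power2_eq_square sum_product)
  also have "(\<Sum>a=1..n. \<Sum>b=1..n. x a * (if a = b then 1 else 0) * x b) = (\<Sum>a=1..n. (x a)^2)"
  proof (intro sum.cong refl)
    fix a assume "a \<in> {1..n}"
    have "(\<Sum>b=1..n. x a * (if a = b then 1 else 0) * x b) = (\<Sum>b=1..n. (if a = b then 1 else 0) * (x a * x b))"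
      by (intro sum.cong refl) simp
    also have "\<dots> = (x a)^2" unfolding delta_sum2 using \<open>a \<in> {1..n}\<close> by (simp add: power2_eq_square)
    finally show "(\<Sum>b=1..n. x a * (if a = b then 1 else 0) * x b) = (x a)^2" .
  qed
  finally show ?thesis .
qed

lemma inner2_shiftI:
  "inner2 n (\<lambda>a b. A a b + m - l * (if a = b then 1 else 0)) X = inner2 n A X + m * inner2 n (\<lambda>_ _. 1) X - l * (\<Sum>a=1..n. X a a)"
proof -
  have "inner2 n (\<lambda>a b. A a b + m - l * (if a = b then 1 else 0)) X =
     inner2 n A X + m * inner2 n (\<lambda>_ _. 1) X - l * (\<Sum>a=1..n. \<Sum>b=1..n. (if a = b then 1 else 0) * X a b)"
    unfolding inner2_def by (simp add: algebra_simps sum.distrib sum_subtractf sum_distrib_left)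
  also have "(\<Sum>a=1..n. \<Sum>b=1..n. (if a = b then 1 else 0) * X a b) = (\<Sum>a=1..n. X a a)"
    by (intro sum.cong refl) (simp only: delta_sum2, simp)
  finally show ?thesis .
qed

lemma quad_ones: "quad n (\<lambda>_ _. 1) x = (\<Sum>a=1..n. x a)^2"
  unfolding quad_def by (simp add: power2_eq_square sum_product)

lemma quad_fact:
  assumes "\<forall>a\<in>{1..n}. \<forall>b\<in>{1..n}. M a b = (\<Sum>k\<in>{1..n}. V a k * V b k)"
  shows "quad n M y = (\<Sum>k=1..n. (\<Sum>a=1..n. y a * V a k)^2)"
proof -
  have "quad n M y = (\<Sum>a=1..n. \<Sum>b=1..n. \<Sum>k=1..n. (y a * V a k) * (y b * V b k))"
    unfolding quad_def
  proof (intro sum.cong refl)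
    fix a b assume "a \<in> {1..n}" "b \<in> {1..n}"
    then have Mab: "M a b = (\<Sum>k=1..n. V a k * V b k)" using assms by blast
    show "y a * M a b * y b = (\<Sum>k=1..n. (y a * V a k) * (y b * V b k))"
      unfolding Mab sum_distrib_left sum_distrib_right by (intro sum.cong refl) (simp add: algebra_simps)
  qed
  also have "\<dots> = (\<Sum>a=1..n. \<Sum>k=1..n. \<Sum>b=1..n. (y a * V a k) * (y b * V b k))"
    by (intro sum.cong refl sum.swap)
  also have "\<dots> = (\<Sum>k=1..n. \<Sum>a=1..n. \<Sum>b=1..n. (y a * V a k) * (y b * V b k))"
    by (rule sum.swap)
  also have "\<dots> = (\<Sum>k=1..n. (\<Sum>a=1..n. y a * V a k)^2)"
    by (simp add: power2_eq_square sum_product)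
  finally show ?thesis .
qed

lemma matvec_fact:
  assumes "\<forall>a\<in>{1..n}. \<forall>b\<in>{1..n}. M a b = (\<Sum>k\<in>{1..n}. V a k * V b k)" and a: "a \<in> {1..n}"
  shows "mat_vec n M y a = (\<Sum>k=1..n. V a k * (\<Sum>b=1..n. y b * V b k))"
proof -
  have "mat_vec n M y a = (\<Sum>b=1..n. \<Sum>k=1..n. V a k * (y b * V b k))"
    unfolding mat_vec_def
  proof (intro sum.cong refl)
    fix b assume "b \<in> {1..n}"
    then have Mab: "M a b = (\<Sum>k=1..n. V a k * V b k)" using assms by blast
    show "M a b * y b = (\<Sum>k=1..n. V a k * (y b * V b k))"
      unfolding Mab sum_distrib_right by (intro sum.cong refl) (simp add: algebra_simps)
  qed
  also have "\<dots> = (\<Sum>k=1..n. \<Sum>b=1..n. V a k * (y b * V b k))" by (rule sum.swap)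
  finally show ?thesis by (simp add: sum_distrib_left)
qed

lemma matvec_shiftI:
  assumes a: "a \<in> {1..n}"
  shows "mat_vec n (\<lambda>a b. A a b + m - l * (if a = b then 1 else 0)) y a = mat_vec n A y a + m * (\<Sum>b=1..n. y b) - l * y a"
proof -
  have "mat_vec n (\<lambda>a b. A a b + m - l * (if a = b then 1 else 0)) y a =
    mat_vec n A y a + m * (\<Sum>b=1..n. y b) - l * (\<Sum>b=1..n. (if a = b then 1 else 0) * y b)"
    unfolding mat_vec_def by (simp add: algebra_simps sum.distrib sum_subtractf sum_distrib_left)
  then show ?thesis unfolding delta_sum2 using a by simp
qed

lemma matvec_lin:
  "mat_vec n A (\<lambda>i. \<Sum>k=1..n. p k * u i k) a = (\<Sum>k=1..n. p k * mat_vec n A (\<lambda>i. u i k) a)"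
proof -
  have "mat_vec n A (\<lambda>i. \<Sum>k=1..n. p k * u i k) a = (\<Sum>b=1..n. \<Sum>k=1..n. p k * (A a b * u b k))"
    unfolding mat_vec_def sum_distrib_left by (intro sum.cong refl) (simp add: algebra_simps)
  also have "\<dots> = (\<Sum>k=1..n. \<Sum>b=1..n. p k * (A a b * u b k))" by (rule sum.swap)
  finally show ?thesis unfolding mat_vec_def sum_distrib_left .
qed

lemma Lw_sym: "Lw N E1 E2 w a b = Lw N E1 E2 w b a"
  unfolding Lw_def L0_def Lij_def by (simp add: mult.commute)

lemma Lw_row:
  assumes E: "\<And>i j. (i,j) \<in> E1 \<union> E2 \<Longrightarrow> i \<in> {1..n} \<and> j \<in> {1..n}"
    and I: "\<And>i. i \<in> {1..N} \<Longrightarrow> i \<in> {1..n} \<and> N + i \<in> {1..n}"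
  shows "(\<Sum>b=1..n. Lw N E1 E2 w a b) = 0"
proof -
  have "(\<Sum>b=1..n. Lw N E1 E2 w a b) = (\<Sum>b=1..n. \<Sum>i=1..N. w i * Lij i (N+i) a b) + (\<Sum>b=1..n. \<Sum>p\<in>E1 \<union> E2. Lij (fst p) (snd p) a b)"
    unfolding Lw_def L0_def sum.distrib by (simp add: case_prod_beta)
  also have "(\<Sum>b=1..n. \<Sum>i=1..N. w i * Lij i (N+i) a b) = (\<Sum>i=1..N. w i * (\<Sum>b=1..n. Lij i (N+i) a b))"
    unfolding sum_distrib_left by (rule sum.swap)
  also have "\<dots> = 0" using I Lij_row by (intro sum.neutral) simp
  also have "(\<Sum>b=1..n. \<Sum>p\<in>E1 \<union> E2. Lij (fst p) (snd p) a b) = (\<Sum>p\<in>E1 \<union> E2. \<Sum>b=1..n. Lij (fst p) (snd p) a b)"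
    by (rule sum.swap)
  also have "\<dots> = 0"
  proof -
    have "\<forall>p\<in>E1 \<union> E2. (\<Sum>b=1..n. Lij (fst p) (snd p) a b) = 0"
    proof
      fix p assume "p \<in> E1 \<union> E2"
      then have "fst p \<in> {1..n}" "snd p \<in> {1..n}" using E[of "fst p" "snd p"] by auto
      then show "(\<Sum>b=1..n. Lij (fst p) (snd p) a b) = 0" by (rule Lij_row)
    qed
    then show ?thesis by simp
  qed
  finally show ?thesis by simp
qed



theorem proposition3:
  fixes N :: nat and E1 E2 :: "(nat \<times> nat) set" and c :: real
    and w :: "nat \<Rightarrow> real" and lam2 mu :: real
    and xi :: real and u :: "nat \<Rightarrow> nat \<Rightarrow> real"
  assumes G1: "simple_graph_on {1..N} E1"
    and G2: "simple_graph_on {N+1..2*N} E2"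
    and conn: "multiplex_connected N E1 E2"
    and c: "c \<ge> 0"
    and opt_sdp: "sdp_optimal N E1 E2 c w lam2 mu"
    and opt_emb: "emb_optimal N E1 E2 c xi u"
  shows "\<forall>p :: nat \<Rightarrow> real. \<forall>a\<in>{1..2*N}.
           mat_vec (2*N) (Lw N E1 E2 w) (\<lambda>i. \<Sum>k=1..2*N. p k * u i k) a
             = lam2 * (\<Sum>k=1..2*N. p k * u a k)"
proof (cases "N = 0")
  case True then show ?thesis by simp
next
  case False
  then have N1: "N \<ge> 1" by simp
  define n where "n = 2 * N"
  have n1: "n \<ge> 1" using N1 unfolding n_def by simp
  define E where "E = E1 \<union> E2"
  have finE: "finite E" using G1 G2 unfolding E_def simple_graph_on_def by auto
  have Erng: "i \<in> {1..n} \<and> j \<in> {1..n}" if "(i,j) \<in> E1 \<union> E2" for i j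
    using that G1 G2 unfolding simple_graph_on_def n_def by auto
  have Irng: "i \<in> {1..n} \<and> N + i \<in> {1..n}" if "i \<in> {1..N}" for i
    using that unfolding n_def by auto
  have row: "(\<Sum>b=1..n. Lw N E1 E2 w' a b) = 0" for w' a
    by (rule Lw_row[OF Erng Irng])
  from opt_emb have feas: "emb_feasible N xi u" and
    opt: "\<And>xi' u'. emb_feasible N xi' u' \<Longrightarrow> emb_objective N E1 E2 c xi' u' \<le> emb_objective N E1 E2 c xi u"
    unfolding emb_optimal_def by auto
  have fu1: "(\<Sum>i=1..n. \<Sum>k=1..n. (u i k)^2) = 1" and fu2: "\<forall>k\<in>{1..n}. (\<Sum>i=1..n. u i k) = 0"
    and fu3: "\<forall>i\<in>{1..N}. sqdist n u i (N+i) \<le> - xi"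
    using feas unfolding emb_feasible_def n_def by auto
  define D where "D = (\<Sum>(i,j)\<in>E. sqdist n u i j) - c * xi"
  have sqE: "(\<Sum>(i,j)\<in>E. inner2 n (Lij i j) (gram n U)) = (\<Sum>(i,j)\<in>E. sqdist n U i j)" for U
  proof (intro sum.cong refl)
    fix p assume "p \<in> E"
    obtain i j where p: "p = (i,j)" by (cases p)
    have "i \<in> {1..n}" "j \<in> {1..n}" using Erng[of i j] \<open>p \<in> E\<close> unfolding p E_def by auto
    then show "(case p of (i,j) \<Rightarrow> inner2 n (Lij i j) (gram n U)) = (case p of (i,j) \<Rightarrow> sqdist n U i j)"
      unfolding p by (simp add: inner2_Lij)
  qed
  from opt_sdp have sfeas: "sdp_feasible N E1 E2 c w lam2 mu"
    and sopt: "\<And>w' lam' mu'. sdp_feasible N E1 E2 c w' lam' mu' \<Longrightarrow> lam' \<le> lam2"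
    unfolding sdp_optimal_def by auto
  have psdM: "psd n (\<lambda>a b. Lw N E1 E2 w a b + mu - lam2 * (if a = b then 1 else 0))"
    and wsum: "(\<Sum>i=1..N. w i) = c" and wpos: "\<forall>i\<in>{1..N}. w i \<ge> 0"
    using sfeas unfolding sdp_feasible_def n_def by auto

  have Dle: "D \<le> lam2"
  proof (rule ccontr)
    assume "\<not> D \<le> lam2"
    define lam' where "lam' = (D + lam2) / 2"
    have lam'1: "lam2 < lam'" and lam'2: "lam' < D" using \<open>\<not> D \<le> lam2\<close> unfolding lam'_def by auto
    define S where "S = {X. (\<forall>a\<in>{1..n}. \<forall>b\<in>{1..n}. X a b = X b a) \<and> (\<forall>x. quad n X x \<ge> 0)
       \<and> inner2 n (\<lambda>_ _. 1) X = 0 \<and> (\<Sum>a=1..n. X a a) = 1}"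
    define cmb where "cmb s X Y = (\<lambda>a b. (1-s) * X a b + s * Y a b)" for s :: real and X Y :: "nat \<Rightarrow> nat \<Rightarrow> real"
    define g where "g i X = inner2 n (L0 E1 E2) X + c * inner2 n (Lij i (N+i)) X - lam'" for i X
    have hyp: "\<exists>i\<in>{1..N}. g i X \<ge> 0" if XS: "X \<in> S" for X
    proof -
      have symX: "\<forall>a\<in>{1..n}. \<forall>b\<in>{1..n}. X a b = X b a" and psdX: "\<forall>x. quad n X x \<ge> 0"
        and onesX: "inner2 n (\<lambda>_ _. 1) X = 0" and trX: "(\<Sum>a=1..n. X a a) = 1"
        using XS unfolding S_def by auto
      obtain U where U: "\<forall>a\<in>{1..n}. \<forall>b\<in>{1..n}. X a b = (\<Sum>k\<in>{1..n}. U a k * U b k)"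
        using chol[of "{1..n}" X] symX psdX unfolding quad_def by auto
      have XU: "inner2 n A X = inner2 n A (gram n U)" for A
        using U unfolding gram_def by (intro inner2_cong) auto
      define M where "M = Max ((\<lambda>i. sqdist n U i (N+i)) ` {1..N})"
      have Mge: "sqdist n U i (N+i) \<le> M" if "i \<in> {1..N}" for i
        unfolding M_def using that by (intro Max_ge) auto
      obtain i0 where i0: "i0 \<in> {1..N}" "sqdist n U i0 (N+i0) = M"
      proof -
        have "M \<in> (\<lambda>i. sqdist n U i (N+i)) ` {1..N}"
          unfolding M_def using N1 by (intro Max_in) auto
        then show ?thesis using that by auto
      qed
      have e1: "(\<Sum>i=1..n. \<Sum>k=1..n. (U i k)^2) = 1"
      proof -
        have "(\<Sum>i=1..n. \<Sum>k=1..n. (U i k)^2) = (\<Sum>i=1..n. X i i)"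
          using U by (intro sum.cong refl) (simp add: power2_eq_square)
        then show ?thesis using trX by simp
      qed
      have e2: "\<forall>k\<in>{1..n}. (\<Sum>i=1..n. U i k) = 0"
      proof -
        have "0 = inner2 n (\<lambda>_ _. 1) (gram n U)" using onesX XU by simp
        also have "\<dots> = (\<Sum>k=1..n. (\<Sum>i=1..n. U i k)^2)" unfolding inner2_gram quad_ones ..
        finally have "(\<Sum>k=1..n. (\<Sum>i=1..n. U i k)^2) = 0" by simp
        then have "\<forall>k\<in>{1..n}. (\<Sum>i=1..n. U i k)^2 = 0" by (subst (asm) sum_nonneg_eq_0_iff) auto
        then show ?thesis by simp
      qed
      have feasU: "emb_feasible N (- M) U"
        unfolding emb_feasible_def using e1 e2 Mge unfolding n_def by auto
      have "emb_objective N E1 E2 c (- M) U \<le> emb_objective N E1 E2 c xi u" by (rule opt[OF feasU])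
      then have "c * (- M) - (\<Sum>(i,j)\<in>E. sqdist n U i j) \<le> - D"
        unfolding emb_objective_def D_def E_def n_def by simp
      moreover have "g i0 X = (\<Sum>(i,j)\<in>E. sqdist n U i j) + c * M - lam'"
      proof -
        have r1: "i0 \<in> {1..n}" "N + i0 \<in> {1..n}" using Irng[OF i0(1)] by auto
        show ?thesis
          unfolding g_def XU inner2_L0 inner2_Lij[OF r1]
          using sqE[of U] i0(2) unfolding E_def by simp
      qed
      ultimately have "g i0 X \<ge> 0" using lam'2 by simp
      then show ?thesis using i0(1) by blast
    qed
    have clS: "cmb s X Y \<in> S" if "X \<in> S" "Y \<in> S" "0 \<le> s" "s \<le> 1" for s X Y
    proof -
      have "\<forall>a\<in>{1..n}. \<forall>b\<in>{1..n}. cmb s X Y a b = cmb s X Y b a"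
        using that unfolding S_def cmb_def by auto
      moreover have "quad n (cmb s X Y) x \<ge> 0" for x
      proof -
        have "quad n X x \<ge> 0" "quad n Y x \<ge> 0" using that unfolding S_def by auto
        then show ?thesis unfolding cmb_def quad_cmb using that by simp
      qed
      moreover have "inner2 n (\<lambda>_ _. 1) (cmb s X Y) = 0"
        using that unfolding cmb_def inner2_cmb S_def by simp
      moreover have "(\<Sum>a=1..n. cmb s X Y a a) = 1"
      proof -
        have "(\<Sum>a=1..n. cmb s X Y a a) = (1-s) * (\<Sum>a=1..n. X a a) + s * (\<Sum>a=1..n. Y a a)"
          unfolding cmb_def by (simp add: sum.distrib sum_distrib_left)
        then show ?thesis using that unfolding S_def by simp
      qed
      ultimately show ?thesis unfolding S_def by blast
    qed
    have afg: "g i (cmb s X Y) = (1-s) * g i X + s * g i Y" for i s X Y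
      unfolding g_def cmb_def inner2_cmb by (simp add: algebra_simps)
    obtain l where l: "\<forall>i\<in>{1..N}. l i \<ge> 0" "sum l {1..N} = 1" "\<forall>X\<in>S. (\<Sum>i\<in>{1..N}. l i * g i X) \<ge> 0"
      using fan[of "{1..N}" S cmb g] N1 clS afg hyp by auto
    define w' where "w' i = c * l i" for i
    have gsum: "(\<Sum>i=1..N. l i * g i X) = inner2 n (Lw N E1 E2 w') X - lam'" for X
    proof -
      have "(\<Sum>i=1..N. l i * g i X) = (\<Sum>i=1..N. l i * inner2 n (L0 E1 E2) X + w' i * inner2 n (Lij i (N+i)) X - l i * lam')"
        unfolding g_def w'_def by (intro sum.cong refl) (simp add: algebra_simps)
      also have "\<dots> = (\<Sum>i=1..N. l i) * inner2 n (L0 E1 E2) X + (\<Sum>i=1..N. w' i * inner2 n (Lij i (N+i)) X) - (\<Sum>i=1..N. l i) * lam'"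
        by (simp only: sum.distrib sum_subtractf sum_distrib_right)
      finally show ?thesis unfolding inner2_Lw using l(2) by simp
    qed
    have Lbound: "inner2 n (Lw N E1 E2 w') X \<ge> lam'" if "X \<in> S" for X
    proof -
      have "0 \<le> (\<Sum>i=1..N. l i * g i X)" using l(3) that by blast
      then show ?thesis using gsum[of X] by linarith
    qed
    have qbound: "quad n (Lw N E1 E2 w') x \<ge> lam' * (\<Sum>a=1..n. (x a)^2)" if sx: "(\<Sum>a=1..n. x a) = 0" for x
    proof (cases "(\<Sum>a=1..n. (x a)^2) = 0")
      case True
      then have "\<forall>a\<in>{1..n}. (x a)^2 = 0" by (subst (asm) sum_nonneg_eq_0_iff) auto
      then have "quad n (Lw N E1 E2 w') x = 0" unfolding quad_def by simp
      then show ?thesis using True by simp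
    next
      case False
      define nx where "nx = (\<Sum>a=1..n. (x a)^2)"
      have nx0: "nx > 0" using False unfolding nx_def by (simp add: order_le_neq_trans sum_nonneg)
      define X where "X = (\<lambda>a b. x a * x b / nx)"
      have inX: "inner2 n A X = inner2 n A (\<lambda>a b. x a * x b) / nx" for A
        unfolding inner2_def X_def sum_divide_distrib by (intro sum.cong refl) simp
      have "X \<in> S" unfolding S_def
      proof (intro CollectI conjI allI ballI)
        show "X a b = X b a" for a b unfolding X_def by (simp add: mult.commute)
        show "quad n X y \<ge> 0" for y
        proof -
          have "quad n X y = (\<Sum>a=1..n. y a * x a) * (\<Sum>b=1..n. y b * x b) / nx"
            unfolding quad_def X_def sum_product sum_divide_distrib by (intro sum.cong refl) (simp add: algebra_simps)
          also have "\<dots> \<ge> 0" using nx0 by simp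
          finally show ?thesis .
        qed
        show "inner2 n (\<lambda>_ _. 1) X = 0" unfolding inX quad_inner2[symmetric] quad_ones sx by simp
        show "(\<Sum>a=1..n. X a a) = 1" unfolding X_def sum_divide_distrib[symmetric] using nx0
          unfolding nx_def by (simp add: power2_eq_square)
      qed
      then have "lam' \<le> quad n (Lw N E1 E2 w') x / nx"
        using Lbound inX quad_inner2 by metis
      then show ?thesis using nx0 unfolding nx_def[symmetric] by (simp add: field_simps)
    qed
    define mu' where "mu' = \<bar>lam'\<bar>"
    have psd': "psd n (\<lambda>a b. Lw N E1 E2 w' a b + mu' - lam' * (if a = b then 1 else 0))"
      unfolding psd_def
    proof
      fix x :: "nat \<Rightarrow> real"
      define m where "m = (\<Sum>a=1..n. x a) / n"
      define z where "z a = x a - m" for a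
      have sz: "(\<Sum>a=1..n. z a) = 0" unfolding z_def m_def using n1 by (simp add: sum_subtractf)
      have qz: "quad n (Lw N E1 E2 w') z = quad n (Lw N E1 E2 w') x"
        unfolding z_def by (rule quad_shift[OF Lw_sym row])
      have sq: "(\<Sum>a=1..n. (x a)^2) = (\<Sum>a=1..n. (z a)^2) + n * m^2"
      proof -
        have "(\<Sum>a=1..n. (x a)^2) = (\<Sum>a=1..n. (z a)^2 + 2 * m * z a + m^2)"
          unfolding z_def by (intro sum.cong refl) (simp add: power2_eq_square algebra_simps)
        also have "\<dots> = (\<Sum>a=1..n. (z a)^2) + 2 * m * (\<Sum>a=1..n. z a) + n * m^2"
          by (simp add: sum.distrib sum_distrib_left)
        finally show ?thesis using sz by simp
      qed
      have sx: "(\<Sum>a=1..n. x a) = n * m" unfolding m_def using n1 by simp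
      have e: "quad n (\<lambda>a b. Lw N E1 E2 w' a b + mu' - lam' * (if a = b then 1 else 0)) x =
        quad n (Lw N E1 E2 w') z + mu' * (n * m)^2 - lam' * ((\<Sum>a=1..n. (z a)^2) + n * m^2)"
        unfolding quad_shiftI qz sx sq ..
      have q: "quad n (Lw N E1 E2 w') z \<ge> lam' * (\<Sum>a=1..n. (z a)^2)" using qbound[OF sz] .
      have e2: "lam' * (\<Sum>a=1..n. (z a)^2) + mu' * (n * m)^2 - lam' * ((\<Sum>a=1..n. (z a)^2) + n * m^2)
         = (n * m^2) * (mu' * n - lam')" by (simp add: algebra_simps power2_eq_square)
      have p: "(n * m^2) * (mu' * n - lam') \<ge> 0"
      proof -
        have "mu' * n \<ge> mu'" using n1 unfolding mu'_def by (simp add: mult_le_cancel_left1)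
        then have "mu' * n - lam' \<ge> 0" unfolding mu'_def by linarith
        then show ?thesis by simp
      qed
      have "0 \<le> quad n (\<lambda>a b. Lw N E1 E2 w' a b + mu' - lam' * (if a = b then 1 else 0)) x"
        using e q e2 p by linarith
      then show "0 \<le> (\<Sum>a=1..n. \<Sum>b=1..n. x a * (Lw N E1 E2 w' a b + mu' - lam' * (if a = b then 1 else 0)) * x b)"
        unfolding quad_def .
    qed
    have "sdp_feasible N E1 E2 c w' lam' mu'"
      unfolding sdp_feasible_def
    proof (intro conjI ballI)
      show "psd (2*N) (\<lambda>a b. Lw N E1 E2 w' a b + mu' - lam' * (if a = b then 1 else 0))"
        using psd' unfolding n_def .
      show "(\<Sum>i=1..N. w' i) = c" unfolding w'_def sum_distrib_left[symmetric] using l(2) by simp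
      show "w' i \<ge> 0" if "i \<in> {1..N}" for i unfolding w'_def using l(1) that c by simp
    qed
    then have "lam' \<le> lam2" by (rule sopt)
    then show False using lam'1 by simp
  qed
  define Ms where "Ms = (\<lambda>a b. Lw N E1 E2 w a b + mu - lam2 * (if a = b then 1 else (0::real)))"
  have symM: "\<forall>a\<in>{1..n}. \<forall>b\<in>{1..n}. Ms a b = Ms b a" unfolding Ms_def using Lw_sym by auto
  have psdMs: "\<forall>x. quad n Ms x \<ge> 0" using psdM unfolding psd_def quad_def Ms_def by blast
  obtain V where V: "\<forall>a\<in>{1..n}. \<forall>b\<in>{1..n}. Ms a b = (\<Sum>k\<in>{1..n}. V a k * V b k)"
    using chol[of "{1..n}" Ms] symM psdMs unfolding quad_def by auto
  have qsum: "(\<Sum>k=1..n. quad n Ms (\<lambda>a. u a k)) \<le> 0"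
  proof -
    have "(\<Sum>k=1..n. quad n Ms (\<lambda>a. u a k)) = inner2 n Ms (gram n u)" by (rule inner2_gram[symmetric])
    also have "\<dots> = inner2 n (Lw N E1 E2 w) (gram n u) + mu * inner2 n (\<lambda>_ _. 1) (gram n u) - lam2 * (\<Sum>a=1..n. gram n u a a)"
      unfolding Ms_def by (rule inner2_shiftI)
    also have "inner2 n (\<lambda>_ _. 1) (gram n u) = 0"
      unfolding inner2_gram quad_ones using fu2 by simp
    also have "(\<Sum>a=1..n. gram n u a a) = 1" unfolding gram_def using fu1 by (simp add: power2_eq_square)
    also have "inner2 n (Lw N E1 E2 w) (gram n u) = (\<Sum>i=1..N. w i * sqdist n u i (N+i)) + (\<Sum>(i,j)\<in>E. sqdist n u i j)"
    proof -
      have "(\<Sum>i=1..N. w i * inner2 n (Lij i (N+i)) (gram n u)) = (\<Sum>i=1..N. w i * sqdist n u i (N+i))"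
      proof (intro sum.cong refl)
        fix i assume "i \<in> {1..N}"
        then have r1: "i \<in> {1..n}" "N + i \<in> {1..n}" using Irng by auto
        show "w i * inner2 n (Lij i (N+i)) (gram n u) = w i * sqdist n u i (N+i)" unfolding inner2_Lij[OF r1] ..
      qed
      then show ?thesis unfolding inner2_Lw inner2_L0 using sqE[of u] unfolding E_def by simp
    qed
    also have "(\<Sum>i=1..N. w i * sqdist n u i (N+i)) \<le> (\<Sum>i=1..N. w i * (- xi))"
      using wpos fu3 by (intro sum_mono mult_left_mono) auto
    also have "(\<Sum>i=1..N. w i * (- xi)) = - c * xi" unfolding sum_distrib_right[symmetric] wsum by simp
    finally have "(\<Sum>k=1..n. quad n Ms (\<lambda>a. u a k)) \<le> D - lam2" unfolding D_def by simp
    then show ?thesis using Dle by simp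
  qed
  have q0: "quad n Ms (\<lambda>a. u a k) = 0" if "k \<in> {1..n}" for k
  proof -
    have "\<forall>k\<in>{1..n}. 0 \<le> quad n Ms (\<lambda>a. u a k)" using psdMs by blast
    moreover then have "(\<Sum>k=1..n. quad n Ms (\<lambda>a. u a k)) = 0" using qsum sum_nonneg[of "{1..n}" "\<lambda>k. quad n Ms (\<lambda>a. u a k)"] by simp
    ultimately show ?thesis using that by (subst (asm) sum_nonneg_eq_0_iff) auto
  qed
  have eig: "mat_vec n (Lw N E1 E2 w) (\<lambda>i. u i k) a = lam2 * u a k" if k: "k \<in> {1..n}" and a: "a \<in> {1..n}" for k a
  proof -
    have "(\<Sum>j=1..n. (\<Sum>b=1..n. u b k * V b j)^2) = 0" using q0[OF k] unfolding quad_fact[OF V] .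
    then have zj: "\<forall>j\<in>{1..n}. (\<Sum>b=1..n. u b k * V b j)^2 = 0" by (subst (asm) sum_nonneg_eq_0_iff) auto
    have "mat_vec n Ms (\<lambda>i. u i k) a = (\<Sum>j=1..n. V a j * (\<Sum>b=1..n. u b k * V b j))"
      by (rule matvec_fact[OF V a])
    also have "\<dots> = 0" using zj by simp
    finally have "mat_vec n Ms (\<lambda>i. u i k) a = 0" .
    moreover have "mat_vec n Ms (\<lambda>i. u i k) a = mat_vec n (Lw N E1 E2 w) (\<lambda>i. u i k) a + mu * (\<Sum>b=1..n. u b k) - lam2 * u a k"
      unfolding Ms_def by (rule matvec_shiftI[OF a])
    ultimately show ?thesis using fu2 k by simp
  qed
  show ?thesis
  proof (intro allI ballI)
    fix p :: "nat \<Rightarrow> real" and a assume "a \<in> {1..2*N}"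
    then have a: "a \<in> {1..n}" unfolding n_def .
    have "mat_vec n (Lw N E1 E2 w) (\<lambda>i. \<Sum>k=1..n. p k * u i k) a = (\<Sum>k=1..n. p k * (lam2 * u a k))"
      unfolding matvec_lin using eig a by (intro sum.cong refl) auto
    also have "\<dots> = lam2 * (\<Sum>k=1..n. p k * u a k)" by (simp add: sum_distrib_left algebra_simps)
    finally show "mat_vec (2*N) (Lw N E1 E2 w) (\<lambda>i. \<Sum>k=1..2*N. p k * u i k) a = lam2 * (\<Sum>k=1..2*N. p k * u a k)"
      unfolding n_def .
  qed
qed


end
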